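(* Let $\alpha_1,\alpha_2,\beta_1,\beta_2$ be positive constants, and let $\{a_k\}_{k\ge0}$, $\{b_k\}_{k\ge1}$ be non-negative sequences with $a_{k+1}\le\alpha_1a_k^2+\alpha_2$ for all $k\ge0$ and $b_{k+1}\le\beta_1b_k+\beta_2b_k^2$ for all $k\ge1$. Assume $\alpha_2\le\frac1{4\alpha_1}$ and $\beta_1<1$. If $a_0=0$ and $b_1\le\frac{\gamma-\beta_1}{\beta_2}$ for some $\gamma\in(\beta_1,1)$, then \[ 0\le\sup_{k\ge0}a_k\le2\alpha_2,\qquad \sum_{k=1}^\infty b_k\le\frac{b_1}{1-\gamma}. \] *)

theory Defs
  imports "HOL-Analysis.Analysis"
begin

end

theory Submission
  imports Defs
begin

theorem lemma4p2:
  fixes \<alpha>1 \<alpha>2 \<beta>1 \<beta>2 \<gamma> :: real and a b :: "nat \<Rightarrow> real"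
  assumes "\<alpha>1 > 0" "\<alpha>2 > 0" "\<beta>1 > 0" "\<beta>2 > 0"
    and "\<And>k. a k \<ge> 0"
    and "\<And>k. k \<ge> 1 \<Longrightarrow> b k \<ge> 0"
    and "\<And>k. a (Suc k) \<le> \<alpha>1 * (a k)\<^sup>2 + \<alpha>2"
    and "\<And>k. k \<ge> 1 \<Longrightarrow> b (Suc k) \<le> \<beta>1 * b k + \<beta>2 * (b k)\<^sup>2"
    and "\<alpha>2 \<le> 1 / (4 * \<alpha>1)"
    and "\<beta>1 < 1"
    and "a 0 = 0"
    and "\<beta>1 < \<gamma>" "\<gamma> < 1"
    and "b 1 \<le> (\<gamma> - \<beta>1) / \<beta>2"
  shows "bdd_above (range a) \<and> 0 \<le> (SUP k. a k) \<and> (SUP k. a k) \<le> 2 * \<alpha>2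
         \<and> summable (\<lambda>k. b (k + 1)) \<and> (\<Sum>k. b (k + 1)) \<le> b 1 / (1 - \<gamma>)"
proof -
  have q: "4 * \<alpha>1 * \<alpha>2 \<le> 1" using assms(1,9) by (simp add: field_simps)
  have A: "a k \<le> 2 * \<alpha>2" for k
  proof (induction k)
    case 0 then show ?case using assms by simp
  next
    case (Suc k)
    have "(a k)\<^sup>2 \<le> (2*\<alpha>2)\<^sup>2" using Suc assms(5) by (intro power_mono) auto
    hence "\<alpha>1 * (a k)\<^sup>2 \<le> \<alpha>1 * (2*\<alpha>2)\<^sup>2" using assms(1) by (intro mult_left_mono) auto
    also have "\<dots> = (4*\<alpha>1*\<alpha>2) * \<alpha>2" by (simp add: power2_eq_square)
    also have "\<dots> \<le> \<alpha>2" using q assms(2) by (simp add: mult_left_le_one_le)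
    finally show ?case using assms(7)[of k] by linarith
  qed
  have bdd: "bdd_above (range a)" using A by (intro bdd_aboveI[of _ "2*\<alpha>2"]) auto
  have s1: "0 \<le> (SUP k. a k)" using cSUP_upper[OF _ bdd, of 0] assms(5)[of 0] by auto
  have s2: "(SUP k. a k) \<le> 2 * \<alpha>2" using A by (intro cSUP_least) auto
  have g0: "0 < \<gamma>" using assms by linarith
  have bb: "\<beta>1 + \<beta>2 * b 1 \<le> \<gamma>" using assms(4,14) by (simp add: field_simps)
  have B: "b (k+1) \<le> \<gamma>^k * b 1" for k
  proof (induction k)
    case 0 then show ?case by simp
  next
    case (Suc k)
    have b0: "0 \<le> b (k+1)" using assms(6) by simp
    have "\<gamma>^k \<le> 1" using g0 assms(13) by (simp add: power_le_one)
    hence "\<gamma>^k * b 1 \<le> b 1" using assms(6)[of 1] using mult_right_mono[of "\<gamma>^k" 1 "b 1"] by simp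
    hence bk: "b (k+1) \<le> b 1" using Suc by linarith
    have "b (Suc k + 1) \<le> \<beta>1 * b (k+1) + \<beta>2 * (b (k+1))\<^sup>2" using assms(8)[of "k+1"] by simp
    also have "\<dots> = b (k+1) * (\<beta>1 + \<beta>2 * b (k+1))" by (simp add: power2_eq_square algebra_simps)
    also have "\<dots> \<le> b (k+1) * \<gamma>"
    proof (rule mult_left_mono[OF _ b0])
      have "\<beta>2 * b (k+1) \<le> \<beta>2 * b 1" using bk assms(4) by simp
      thus "\<beta>1 + \<beta>2 * b (k+1) \<le> \<gamma>" using bb by linarith
    qed
    also have "\<dots> \<le> \<gamma>^k * b 1 * \<gamma>" using Suc g0 by (simp add: mult_right_mono)
    finally show ?case by (simp add: algebra_simps)
  qed
  have geo: "summable (\<lambda>k. \<gamma>^k * b 1)" using g0 assms(13)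
    by (intro summable_mult2 summable_geometric) simp
  have sb: "summable (\<lambda>k. b (k + 1))"
    by (rule summable_comparison_test'[OF geo]) (use B assms(6) in auto)
  have "(\<Sum>k. b (k + 1)) \<le> (\<Sum>k. \<gamma>^k * b 1)"
    by (rule suminf_le[OF _ sb geo]) (use B in auto)
  also have "\<dots> = b 1 / (1 - \<gamma>)"
    using suminf_geometric[of \<gamma>] g0 assms(13) suminf_mult2[of "\<lambda>k. \<gamma>^k" "b 1"]
    by (simp add: summable_geometric)
  finally show ?thesis using bdd s1 s2 sb by blast
qed

end
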